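(* Let $G$ be a finite connected simple graph and let $\overrightarrow{G}$ be the directed graph obtained by replacing every edge $xy$ of $G$ by the two directed edges $\overrightarrow{xy}$ and $\overrightarrow{yx}$. Then the complex $\Delta(\overrightarrow{G})$ is pure if and only if $\mathrm{diam}(G)\leqslant 2$.
   Context: For a finite directed graph $D$, the complex of directed trees $\Delta(D)$ has the directed edges of $D$ as vertices, and its faces are the edge sets of directed forests in $D$ (vertex-disjoint unions of rooted directed trees; equivalently, edge sets in which every vertex has in-degree at most $1$ and there is no directed cycle). A simplicial complex is pure if all its maximal faces have the same dimension. $\mathrm{diam}(G)$ is the greatest distance between two vertices of $G$. *)

theory Defs
  imports Main
begin

definition simple_graph :: "'a set \<Rightarrow> ('a \<Rightarrow> 'a \<Rightarrow> bool) \<Rightarrow> bool" where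
  "simple_graph V E \<longleftrightarrow> finite V \<and>
     (\<forall>x y. E x y \<longrightarrow> x \<in> V \<and> y \<in> V \<and> x \<noteq> y) \<and>
     (\<forall>x y. E x y \<longrightarrow> E y x)"

text \<open>A walk from u to v given as its list of vertices; its length is length xs - 1.\<close>
definition is_walk :: "('a \<Rightarrow> 'a \<Rightarrow> bool) \<Rightarrow> 'a list \<Rightarrow> 'a \<Rightarrow> 'a \<Rightarrow> bool" where
  "is_walk E xs u v \<longleftrightarrow> xs \<noteq> [] \<and> hd xs = u \<and> last xs = v \<and>
     (\<forall>i. Suc i < length xs \<longrightarrow> E (xs ! i) (xs ! Suc i))"

definition connected_graph :: "'a set \<Rightarrow> ('a \<Rightarrow> 'a \<Rightarrow> bool) \<Rightarrow> bool" where
  "connected_graph V E \<longleftrightarrow> V \<noteq> {} \<and> (\<forall>u\<in>V. \<forall>v\<in>V. \<exists>xs. is_walk E xs u v)"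

definition gdist :: "('a \<Rightarrow> 'a \<Rightarrow> bool) \<Rightarrow> 'a \<Rightarrow> 'a \<Rightarrow> nat" where
  "gdist E u v = (LEAST n. \<exists>xs. is_walk E xs u v \<and> length xs = Suc n)"

definition diam :: "'a set \<Rightarrow> ('a \<Rightarrow> 'a \<Rightarrow> bool) \<Rightarrow> nat" where
  "diam V E = Max {gdist E u v | u v. u \<in> V \<and> v \<in> V}"

definition double_digraph :: "('a \<Rightarrow> 'a \<Rightarrow> bool) \<Rightarrow> ('a \<times> 'a) set" where
  "double_digraph E = {(x, y). E x y \<or> E y x}"

definition dir_tree_complex :: "('a \<times> 'a) set \<Rightarrow> ('a \<times> 'a) set set" where
  "dir_tree_complex A = {F. F \<subseteq> A \<and> (\<forall>v. card {u. (u, v) \<in> F} \<le> 1) \<and> acyclic F}"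

definition maximal_faces :: "'b set set \<Rightarrow> 'b set set" where
  "maximal_faces K = {F \<in> K. \<forall>H \<in> K. F \<subseteq> H \<longrightarrow> F = H}"

definition pure_complex :: "'b set set \<Rightarrow> bool" where
  "pure_complex K \<longleftrightarrow> (\<forall>F \<in> maximal_faces K. \<forall>H \<in> maximal_faces K. card F = card H)"

end

theory Submission
  imports Defs
begin


definition roots :: "'a set \<Rightarrow> ('a \<times> 'a) set \<Rightarrow> 'a set" where
  "roots V F = {v\<in>V. \<forall>u. (u,v) \<notin> F}"

lemma max_ex:
  fixes f :: "'b \<Rightarrow> nat"
  assumes "finite C" "C \<noteq> {}" shows "\<exists>F\<in>C. \<forall>H\<in>C. f H \<le> f F"
proof -
  have "Max (f ` C) \<in> f ` C" using assms by simp
  then obtain F where "F \<in> C" "f F = Max (f ` C)" by auto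
  then show ?thesis using assms by (metis Max_ge finite_imageI image_eqI)
qed

lemma walk_gdist:
  assumes "is_walk E xs u v"
  shows "\<exists>ys. is_walk E ys u v \<and> length ys = Suc (gdist E u v)"
proof -
  have "\<exists>n ys. is_walk E ys u v \<and> length ys = Suc n"
    using assms by (intro exI[of _ "length xs - 1"] exI[of _ xs]) (auto simp: is_walk_def)
  then show ?thesis unfolding gdist_def by (rule LeastI_ex)
qed

lemma gdist_le:
  assumes "is_walk E xs u v" shows "gdist E u v \<le> length xs - 1"
  unfolding gdist_def
  by (rule Least_le) (use assms in \<open>auto simp: is_walk_def\<close>)

lemma short_walk:
  assumes w: "is_walk E xs u v" and l: "length xs \<le> 3"
  shows "\<exists>w. (w = u \<or> E u w) \<and> (w = v \<or> E w v)"
proof (cases xs)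
  case Nil then show ?thesis using w by (simp add: is_walk_def)
next
  case (Cons a t)
  note xs = this
  have au: "a = u" using w xs by (simp add: is_walk_def)
  have st: "\<And>i. Suc i < length xs \<Longrightarrow> E (xs ! i) (xs ! Suc i)" using w by (simp add: is_walk_def)
  show ?thesis
  proof (cases t)
    case Nil then show ?thesis using w xs by (auto simp: is_walk_def)
  next
    case (Cons b t2)
    note t = this
    have Eab: "E a b" using st[of 0] xs t by simp
    show ?thesis
    proof (cases t2)
      case Nil then have "b = v" using w xs t by (simp add: is_walk_def)
      then show ?thesis using Eab au by blast
    next
      case (Cons c t3)
      then have "t3 = []" using l xs t by simp
      then have "c = v" using w xs t Cons by (simp add: is_walk_def)
      moreover have "E b c" using st[of 1] xs t Cons by simp
      ultimately show ?thesis using Eab au by blast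
    qed
  qed
qed

lemma walk_cross:
  "is_walk E xs a b \<Longrightarrow> a \<in> W \<Longrightarrow> b \<notin> W \<Longrightarrow> \<exists>x y. E x y \<and> x \<in> W \<and> y \<notin> W"
proof (induction xs arbitrary: a)
  case Nil then show ?case by (simp add: is_walk_def)
next
  case (Cons c t)
  show ?case
  proof (cases t)
    case Nil then show ?thesis using Cons.prems by (auto simp: is_walk_def)
  next
    case (Cons d t')
    have c: "c = a" using Cons.prems(1) by (simp add: is_walk_def)
    have st: "\<And>i. Suc i < length (c#t) \<Longrightarrow> E ((c#t) ! i) ((c#t) ! Suc i)"
      using Cons.prems(1) unfolding is_walk_def by (metis length_Cons nth_Cons_Suc)
    have Ead: "E a d" using st[of 0] c \<open>t = d # t'\<close> by simp
    have wt: "is_walk E t d b"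
      unfolding is_walk_def
    proof (intro conjI allI impI)
      show "t \<noteq> []" "hd t = d" using \<open>t = d # t'\<close> by auto
      show "last t = b" using Cons.prems(1) \<open>t = d # t'\<close> by (simp add: is_walk_def)
      fix i assume "Suc i < length t"
      then show "E (t ! i) (t ! Suc i)" using st[of "Suc i"] by simp
    qed
    show ?thesis
    proof (cases "d \<in> W")
      case True then show ?thesis using Cons.IH[OF wt] Cons.prems by blast
    next
      case False then show ?thesis using Ead Cons.prems by blast
    qed
  qed
qed

lemma acyclic_bip:
  assumes "R \<subseteq> P \<times> Q" "P \<inter> Q = {}" shows "acyclic R"
  unfolding acyclic_def
proof
  fix x show "(x,x) \<notin> R\<^sup>+"
  proof
    assume h: "(x,x) \<in> R\<^sup>+"
    then have "x \<in> Q" using assms by (cases rule: tranclE) auto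
    moreover have "x \<in> P" using h assms by (cases rule: converse_tranclE) auto
    ultimately show False using assms by auto
  qed
qed



locale sg =
  fixes V :: "'a set" and E :: "'a \<Rightarrow> 'a \<Rightarrow> bool"
  assumes sg: "simple_graph V E"
begin

abbreviation "K \<equiv> dir_tree_complex (double_digraph E)"

lemma finV: "finite V" using sg by (simp add: simple_graph_def)
lemma EV: "E x y \<Longrightarrow> x \<in> V \<and> y \<in> V \<and> x \<noteq> y" using sg by (simp add: simple_graph_def)
lemma Esym: "E x y \<Longrightarrow> E y x" using sg by (simp add: simple_graph_def)
lemma A_iff: "(x,y) \<in> double_digraph E \<longleftrightarrow> E x y" unfolding double_digraph_def using Esym by auto
lemma A_sub: "double_digraph E \<subseteq> V \<times> V" using A_iff EV by auto
lemma finA: "finite (double_digraph E)" using A_sub finV by (meson finite_SigmaI finite_subset)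

lemma face_sub: "F \<in> K \<Longrightarrow> F \<subseteq> V \<times> V" using A_sub by (auto simp: dir_tree_complex_def)
lemma face_fin: "F \<in> K \<Longrightarrow> finite F" using face_sub finV by (meson finite_SigmaI finite_subset)
lemma face_acyc: "F \<in> K \<Longrightarrow> acyclic F" by (simp add: dir_tree_complex_def)
lemma finK: "finite K"
proof -
  have "K \<subseteq> Pow (double_digraph E)" by (auto simp: dir_tree_complex_def)
  then show ?thesis using finA by (meson finite_Pow_iff finite_subset)
qed

lemma face_indeg: assumes F: "F \<in> K" and a: "(a,v) \<in> F" and b: "(b,v) \<in> F" shows "a = b"
proof (rule ccontr)
  assume ne: "a \<noteq> b"
  have fin: "finite {u. (u,v) \<in> F}"
    using face_sub[OF F] finV by (auto intro: finite_subset[of _ V])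
  have "card {u. (u,v) \<in> F} \<le> 1" using F by (simp add: dir_tree_complex_def)
  moreover have "{a,b} \<subseteq> {u. (u,v) \<in> F}" using a b by auto
  moreover have "card {a,b} = 2" using ne by simp
  ultimately show False using card_mono[OF fin, of "{a,b}"] by linarith
qed

lemma card_roots: assumes F: "F \<in> K" shows "card F + card (roots V F) = card V"
proof -
  have inj: "inj_on snd F" unfolding inj_on_def using face_indeg[OF F] by fastforce
  have img: "snd ` F = V - roots V F" using face_sub[OF F] unfolding roots_def by force
  have "card F = card (V - roots V F)" using card_image[OF inj] img by simp
  also have "\<dots> = card V - card (roots V F)"
    by (rule card_Diff_subset) (auto simp: roots_def intro: finite_subset[OF _ finV])
  finally show ?thesis using card_mono[OF finV, of "roots V F"] by (auto simp: roots_def)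
qed

lemma comparable:
  assumes F: "F \<in> K" and av: "(a,v) \<in> F\<^sup>*"
  shows "(b,v) \<in> F\<^sup>* \<Longrightarrow> (a,b) \<in> F\<^sup>* \<or> (b,a) \<in> F\<^sup>*"
  using av
proof (induction arbitrary: b rule: rtrancl_induct)
  case base then show ?case by simp
next
  case (step y z)
  from step.prems show ?case
  proof (cases rule: rtranclE)
    case base then show ?thesis using step.hyps(1,2) by (meson rtrancl.rtrancl_into_rtrancl)
  next
    case (step y')
    then have "y' = y" using face_indeg[OF F] \<open>(y,z) \<in> F\<close> by blast
    then show ?thesis using \<open>(b, y') \<in> F\<^sup>*\<close> \<open>\<And>b. (b, y) \<in> F\<^sup>* \<Longrightarrow> (a, b) \<in> F\<^sup>* \<or> (b, a) \<in> F\<^sup>*\<close> by blast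
  qed
qed

lemma root_eq: assumes "(r,x) \<in> F\<^sup>*" "x \<in> roots V F" shows "x = r"
  using assms(1)
proof (cases rule: rtranclE)
  case (step y) then show ?thesis using assms(2) by (auto simp: roots_def)
qed simp

lemma roots_ne: assumes F: "F \<in> K" and V: "V \<noteq> {}" shows "roots V F \<noteq> {}"
proof -
  have "wf F" using finite_acyclic_wf face_fin[OF F] face_acyc[OF F] by blast
  moreover obtain x where "x \<in> V" using V by blast
  ultimately obtain z where "z \<in> V" "\<forall>y. (y,z) \<in> F \<longrightarrow> y \<notin> V" unfolding wf_eq_minimal by blast
  then show ?thesis using face_sub[OF F] unfolding roots_def by blast
qed

lemma max_reach:
  assumes F: "F \<in> maximal_faces K" and r: "r \<in> roots V F" and e: "E r w"
  shows "(r,w) \<in> F\<^sup>*"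
proof (rule ccontr)
  assume nr: "(r,w) \<notin> F\<^sup>*"
  have FK: "F \<in> K" using F by (simp add: maximal_faces_def)
  let ?H = "insert (w,r) F"
  have "?H \<in> K"
    unfolding dir_tree_complex_def
  proof (intro CollectI conjI allI)
    have "(w,r) \<in> double_digraph E" using A_iff Esym[OF e] by simp
    then show "?H \<subseteq> double_digraph E" using FK by (auto simp: dir_tree_complex_def)
    show "acyclic ?H" using face_acyc[OF FK] nr by simp
    fix v show "card {u. (u,v) \<in> ?H} \<le> 1"
    proof (cases "v = r")
      case True then have "{u. (u,v) \<in> ?H} = {w}" using r by (auto simp: roots_def)
      then show ?thesis by simp
    next
      case False then have "{u. (u,v) \<in> ?H} = {u. (u,v) \<in> F}" by auto
      then show ?thesis using FK by (simp add: dir_tree_complex_def)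
    qed
  qed
  then have "F = ?H" using F by (auto simp: maximal_faces_def)
  then have "(w,r) \<in> F" by blast
  then show False using r by (auto simp: roots_def)
qed

lemma extend_max: assumes F: "F \<in> K" shows "\<exists>G \<in> maximal_faces K. F \<subseteq> G"
proof -
  define M where "M = {H \<in> K. F \<subseteq> H}"
  have "finite M" unfolding M_def using finK by simp
  moreover have "M \<noteq> {}" using F unfolding M_def by auto
  ultimately obtain G where G: "G \<in> M" and Gm: "\<And>H. H\<in>M \<Longrightarrow> card H \<le> card G"
    using max_ex[of M card] by metis
  have GK: "G \<in> K" and FG: "F \<subseteq> G" using G unfolding M_def by auto
  have "G \<in> maximal_faces K"
    unfolding maximal_faces_def
  proof (intro CollectI conjI ballI impI)
    show "G \<in> K" by (rule GK)
    fix H assume H: "H \<in> K" "G \<subseteq> H"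
    then have "H \<in> M" using FG unfolding M_def by auto
    then have "card H \<le> card G" by (rule Gm)
    then have "card G = card H" using card_mono[OF face_fin[OF H(1)] H(2)] by linarith
    then show "G = H" by (rule card_subset_eq[OF face_fin[OF H(1)] H(2)])
  qed
  then show ?thesis using FG by blast
qed

end



locale csg = sg +
  assumes conn: "connected_graph V E"
begin

lemma Vne: "V \<noteq> {}" using conn by (simp add: connected_graph_def)

lemma walk_ex: "u \<in> V \<Longrightarrow> v \<in> V \<Longrightarrow> \<exists>xs. is_walk E xs u v"
  using conn by (simp add: connected_graph_def)

lemma empty_face: "{} \<in> K" by (simp add: dir_tree_complex_def acyclic_def)

lemma one_root_face:
  assumes r: "r \<in> V"
  shows "\<exists>F \<in> K. roots V F = {r}"
proof -
  define D where "D = {F \<in> K. (\<forall>u. (u,r) \<notin> F) \<and> (\<forall>a b. (a,b) \<in> F \<longrightarrow> (r,a) \<in> F\<^sup>*)}"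
  have "finite D" unfolding D_def using finK by simp
  moreover have "{} \<in> D" unfolding D_def using empty_face by simp
  ultimately obtain F where FD: "F \<in> D" and Fm: "\<And>H. H\<in>D \<Longrightarrow> card H \<le> card F"
    using max_ex[of D card] by (metis empty_iff)
  have FK: "F \<in> K" and Fr: "\<And>u. (u,r) \<notin> F" and Fs: "\<And>a b. (a,b) \<in> F \<Longrightarrow> (r,a) \<in> F\<^sup>*"
    using FD unfolding D_def by auto
  define W where "W = {y. (r,y) \<in> F\<^sup>*}"
  have VW: "V \<subseteq> W"
  proof
    fix y0 assume y0: "y0 \<in> V"
    show "y0 \<in> W"
    proof (rule ccontr)
      assume ny0: "y0 \<notin> W"
      obtain xs where "is_walk E xs r y0" using walk_ex[OF r y0] by blast
      moreover have "r \<in> W" unfolding W_def by simp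
      ultimately obtain x y where Exy: "E x y" and xW: "x \<in> W" and yW: "y \<notin> W"
        using walk_cross ny0 by metis
      have rx: "(r,x) \<in> F\<^sup>*" using xW unfolding W_def by simp
      have noin: "\<And>a. (a,y) \<notin> F"
      proof
        fix a assume "(a,y) \<in> F"
        then have "(r,y) \<in> F\<^sup>*" using Fs by (meson rtrancl.rtrancl_into_rtrancl)
        then show False using yW unfolding W_def by simp
      qed
      have noout: "\<And>b. (y,b) \<notin> F"
      proof
        fix b assume "(y,b) \<in> F"
        then have "(r,y) \<in> F\<^sup>*" using Fs by blast
        then show False using yW unfolding W_def by simp
      qed
      have nyx: "(y,x) \<notin> F\<^sup>*"
      proof
        assume "(y,x) \<in> F\<^sup>*"
        then show False
        proof (cases rule: converse_rtranclE)
          case base then show ?thesis using xW yW by simp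
        next
          case (step z) then show ?thesis using noout by blast
        qed
      qed
      have yr: "y \<noteq> r" using yW unfolding W_def by auto
      let ?H = "insert (x,y) F"
      have HK: "?H \<in> K"
        unfolding dir_tree_complex_def
      proof (intro CollectI conjI allI)
        have "(x,y) \<in> double_digraph E" using A_iff Exy by simp
        then show "?H \<subseteq> double_digraph E" using FK by (auto simp: dir_tree_complex_def)
        show "acyclic ?H" using face_acyc[OF FK] nyx by simp
        fix v show "card {u. (u,v) \<in> ?H} \<le> 1"
        proof (cases "v = y")
          case True then have "{u. (u,v) \<in> ?H} = {x}" using noin by auto
          then show ?thesis by simp
        next
          case False then have "{u. (u,v) \<in> ?H} = {u. (u,v) \<in> F}" by auto
          then show ?thesis using FK by (simp add: dir_tree_complex_def)
        qed
      qed
      have mono: "F\<^sup>* \<subseteq> ?H\<^sup>*" by (rule rtrancl_mono) blast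
      have "?H \<in> D"
        unfolding D_def
      proof (intro CollectI conjI allI impI)
        show "?H \<in> K" by (rule HK)
        fix u show "(u,r) \<notin> ?H" using Fr yr by simp
      next
        fix a b assume "(a,b) \<in> ?H"
        then have "(r,a) \<in> F\<^sup>*" using Fs rx by blast
        then show "(r,a) \<in> ?H\<^sup>*" using mono by blast
      qed
      then have "card ?H \<le> card F" by (rule Fm)
      moreover have "(x,y) \<notin> F" using noin by blast
      then have "card ?H = Suc (card F)" using face_fin[OF FK] by simp
      ultimately show False by simp
    qed
  qed
  have "roots V F = {r}"
  proof
    show "{r} \<subseteq> roots V F" using r Fr unfolding roots_def by blast
    show "roots V F \<subseteq> {r}"
    proof
      fix v assume v: "v \<in> roots V F"
      then have "v \<in> W" using VW unfolding roots_def by blast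
      then have "(r,v) \<in> F\<^sup>*" unfolding W_def by simp
      then show "v \<in> {r}" using root_eq v by blast
    qed
  qed
  then show ?thesis using FK by blast
qed

lemma one_root_max:
  assumes r: "r \<in> V"
  shows "\<exists>G \<in> maximal_faces K. card G + 1 = card V"
proof -
  obtain F where FK: "F \<in> K" and Fr: "roots V F = {r}" using one_root_face[OF r] by blast
  obtain G where G: "G \<in> maximal_faces K" and FG: "F \<subseteq> G" using extend_max[OF FK] by blast
  have GK: "G \<in> K" using G by (simp add: maximal_faces_def)
  have "roots V G \<subseteq> roots V F" using FG unfolding roots_def by blast
  moreover have "roots V G \<noteq> {}" using roots_ne[OF GK Vne] .
  ultimately have "roots V G = {r}" using Fr by (simp add: subset_singleton_iff)
  then show ?thesis using card_roots[OF GK] G by auto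
qed

end



context csg
begin

lemma two_root_max:
  assumes u: "u \<in> V" and v: "v \<in> V" and uv: "u \<noteq> v" and nE: "\<not> E u v"
    and nP: "\<And>x. \<not> (E u x \<and> E x v)"
  shows "\<exists>G \<in> maximal_faces K. card G + 2 \<le> card V"
proof -
  define C where "C = {F \<in> K. (\<forall>x. E u x \<longrightarrow> (u,x) \<in> F) \<and> (\<forall>x. E v x \<longrightarrow> (v,x) \<in> F)
      \<and> (\<forall>a. (a,u) \<notin> F) \<and> (\<forall>a. (a,v) \<notin> F)}"
  define F0 where "F0 = {(a,b). (a = u \<and> E u b) \<or> (a = v \<and> E v b)}"
  have nEvu: "\<not> E v u" using nE Esym[of v u] by blast
  have F0K: "F0 \<in> K"
    unfolding dir_tree_complex_def
  proof (intro CollectI conjI allI)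
    show "F0 \<subseteq> double_digraph E" unfolding F0_def using A_iff by auto
    have "F0 \<subseteq> {u,v} \<times> (V - {u,v})" unfolding F0_def using EV nE nEvu by auto
    then show "acyclic F0" by (rule acyclic_bip) auto
    fix b
    have "{a. (a,b) \<in> F0} \<subseteq> {if E u b then u else v}"
      unfolding F0_def using nP[of b] Esym[of v b] by auto
    then have "card {a. (a,b) \<in> F0} \<le> card {if E u b then u else v}" by (rule card_mono[rotated]) simp
    then show "card {a. (a,b) \<in> F0} \<le> 1" by simp
  qed
  have "F0 \<in> C" unfolding C_def using F0K EV nEvu nE by (auto simp: F0_def)
  moreover have "finite C" unfolding C_def using finK by simp
  ultimately obtain F where FC: "F \<in> C" and Fm: "\<And>H. H\<in>C \<Longrightarrow> card H \<le> card F"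
    using max_ex[of C card] by (metis empty_iff)
  have FK: "F \<in> K" using FC unfolding C_def by simp
  have Fmax: "F \<in> maximal_faces K"
    unfolding maximal_faces_def
  proof (intro CollectI conjI ballI impI)
    show "F \<in> K" by (rule FK)
    fix H assume H: "H \<in> K" "F \<subseteq> H"
    have ac: "acyclic H" using face_acyc[OF H(1)] .
    have noin: "\<And>a w. w \<in> {u,v} \<Longrightarrow> (a,w) \<notin> H"
    proof
      fix a w assume w: "w \<in> {u,v}" and aw: "(a,w) \<in> H"
      then have "(a,w) \<in> double_digraph E" using H(1) by (auto simp: dir_tree_complex_def)
      then have "E a w" using A_iff by blast
      then have "E w a" by (rule Esym)
      then have "(w,a) \<in> F" using FC w unfolding C_def by auto
      then have "(w,a) \<in> H" using H(2) by blast
      then have "(w,w) \<in> H\<^sup>+" using aw by (meson trancl.r_into_trancl trancl_into_trancl)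
      then show False using ac unfolding acyclic_def by blast
    qed
    have "H \<in> C" unfolding C_def using H FC noin unfolding C_def by blast
    then have "card H \<le> card F" by (rule Fm)
    then have "card F = card H" using card_mono[OF face_fin[OF H(1)] H(2)] by linarith
    then show "F = H" by (rule card_subset_eq[OF face_fin[OF H(1)] H(2)])
  qed
  have "{u,v} \<subseteq> roots V F" using FC u v unfolding C_def roots_def by auto
  moreover have "finite (roots V F)" using finV unfolding roots_def by simp
  ultimately have "card {u,v} \<le> card (roots V F)" by (simp add: card_mono)
  then have "2 \<le> card (roots V F)" using uv by simp
  then have "card F + 2 \<le> card V" using card_roots[OF FK] by linarith
  then show ?thesis using Fmax by blast
qed

end



context csg
begin

lemma diam2_card:
  assumes d: "\<And>u v. u \<in> V \<Longrightarrow> v \<in> V \<Longrightarrow> gdist E u v \<le> 2"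
    and F: "F \<in> maximal_faces K"
  shows "card F + 1 = card V"
proof -
  have FK: "F \<in> K" using F by (simp add: maximal_faces_def)
  obtain r where r: "r \<in> roots V F" using roots_ne[OF FK Vne] by blast
  have "roots V F = {r}"
  proof
    show "{r} \<subseteq> roots V F" using r by simp
    show "roots V F \<subseteq> {r}"
    proof
      fix r2 assume r2: "r2 \<in> roots V F"
      have rV: "r \<in> V" "r2 \<in> V" using r r2 by (auto simp: roots_def)
      obtain xs where "is_walk E xs r r2" using walk_ex[OF rV] by blast
      from walk_gdist[OF this] obtain ys where ys: "is_walk E ys r r2" "length ys = Suc (gdist E r r2)"
        by blast
      have l3: "length ys \<le> 3" using ys(2) d[OF rV] by simp
      obtain w where w: "w = r \<or> E r w" "w = r2 \<or> E w r2" using short_walk[OF ys(1) l3] by blast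
      have h1: "(r,w) \<in> F\<^sup>*" using w(1) max_reach[OF F r] by auto
      have "w = r2 \<or> E r2 w" using w(2) Esym[of w r2] by blast
      then have h2: "(r2,w) \<in> F\<^sup>*" using max_reach[OF F r2] by auto
      have "(r,r2) \<in> F\<^sup>* \<or> (r2,r) \<in> F\<^sup>*" using comparable[OF FK h1 h2] .
      then show "r2 \<in> {r}" using root_eq[of r r2 F] root_eq[of r2 r F] r r2 by blast
    qed
  qed
  then show ?thesis using card_roots[OF FK] by simp
qed

end

theorem mainTheorem5:
  fixes V :: "'a set" and E :: "'a \<Rightarrow> 'a \<Rightarrow> bool"
  assumes "simple_graph V E" and "connected_graph V E"
  shows "pure_complex (dir_tree_complex (double_digraph E)) \<longleftrightarrow> diam V E \<le> 2"
proof -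
  interpret csg V E
    by (intro csg.intro sg.intro csg_axioms.intro assms)
  define S where "S = {gdist E u v | u v. u \<in> V \<and> v \<in> V}"
  have finS: "finite S" unfolding S_def using finV by (intro finite_image_set2) auto
  have dle: "\<And>u v. u \<in> V \<Longrightarrow> v \<in> V \<Longrightarrow> gdist E u v \<le> diam V E"
    unfolding diam_def using finS unfolding S_def by (intro Max_ge) auto
  show ?thesis
  proof
    assume d: "diam V E \<le> 2"
    have "\<And>u v. u \<in> V \<Longrightarrow> v \<in> V \<Longrightarrow> gdist E u v \<le> 2" using dle d by (meson order_trans)
    then have "\<And>F. F \<in> maximal_faces K \<Longrightarrow> card F + 1 = card V" using diam2_card by blast
    then show "pure_complex K" unfolding pure_complex_def by (metis add_right_cancel)
  next
    assume p: "pure_complex K"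
    show "diam V E \<le> 2"
    proof (rule ccontr)
      assume nd: "\<not> diam V E \<le> 2"
      obtain x0 where "x0 \<in> V" using Vne by blast
      then have "gdist E x0 x0 \<in> S" unfolding S_def by blast
      then have "S \<noteq> {}" by blast
      then have "diam V E \<in> S" unfolding diam_def S_def[symmetric] using finS by (rule Max_in[rotated])
      then have "\<exists>u v. diam V E = gdist E u v \<and> u \<in> V \<and> v \<in> V"
        unfolding S_def by (simp only: mem_Collect_eq)
      then obtain u v where g0: "diam V E = gdist E u v" and u: "u \<in> V" and v: "v \<in> V"
        by (elim exE conjE)
      have g: "gdist E u v = diam V E" using g0 by (rule sym)
      have g3: "3 \<le> gdist E u v" using g nd by simp
      have uv: "u \<noteq> v"
      proof
        assume "u = v"
        then have wk: "is_walk E [u] u v" by (simp add: is_walk_def)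
        then show False using gdist_le[OF wk] g3 by simp
      qed
      have nE: "\<not> E u v"
      proof
        assume "E u v"
        then have wk: "is_walk E [u,v] u v" by (simp add: is_walk_def)
        then show False using gdist_le[OF wk] g3 by simp
      qed
      have nP: "\<And>x. \<not> (E u x \<and> E x v)"
      proof
        fix x assume "E u x \<and> E x v"
        then have wk: "is_walk E [u,x,v] u v" by (simp add: is_walk_def less_Suc_eq nth_Cons')
        then show False using gdist_le[OF wk] g3 by simp
      qed
      obtain G2 where G2: "G2 \<in> maximal_faces K" "card G2 + 2 \<le> card V"
        using two_root_max[OF u v uv nE nP] by blast
      obtain G1 where G1: "G1 \<in> maximal_faces K" "card G1 + 1 = card V"
        using one_root_max[OF u] by blast
      have "card G1 = card G2" using p G1 G2 unfolding pure_complex_def by blast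
      then show False using G1 G2 by linarith
    qed
  qed
qed

end
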